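(* Assume the standing setup and let $p$ be a prime divisor of $N$. Then the elements $$\alpha_{i,j,k}=q_{i,j}(\theta)\,\theta^k,\qquad 1\le i\le m,\ 1\le j\le\ell_i,\ 0\le k<\deg g_i,$$ where $q_{i,j}\in\mathbb Z[x]$ is the quotient of the division of $f$ by $g_i^j$, form a $\mathbb Z_{(p)}$-basis of $\mathbb Z_{(p)}[\theta]$. (In particular they are $\mathbb Z$-linearly independent and the polynomials $q_{i,j}x^k$ are linearly independent modulo $p$.)
   Context: Standing setup: $f\in\mathbb Z[x]$ monic irreducible of degree $n>1$, $\theta\in\overline{\mathbb Q}$ a root; $N>1$ an integer all of whose prime divisors are $>n$; $g_1,\dots,g_m\in\mathbb Z[x]$ monic of positive degree and $\ell_1,\dots,\ell_m$ positive integers with $f\equiv g_1^{\ell_1}\cdots g_m^{\ell_m}\pmod N$, such that for every prime $p\mid N$ the polynomials $\operatorname{red}_p(g_i)$ (reductions mod $p$) are squarefree and pairwise coprime in $\mathbb F_p[x]$. $\mathbb Z_{(p)}$ is the localization of $\mathbb Z$ at $p\mathbb Z$. *)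

theory Defs
  imports Complex_Main "Berlekamp_Zassenhaus.Poly_Mod"
begin

definition zloc :: "int \<Rightarrow> rat set" where
  "zloc p = {r. \<exists>a b. b \<noteq> 0 \<and> \<not> p dvd b \<and> r = of_int a / of_int b}"

definition zloc_adj :: "int \<Rightarrow> complex \<Rightarrow> complex set" where
  "zloc_adj p \<theta> = {poly (map_poly of_rat q) \<theta> | q. \<forall>i. coeff q i \<in> zloc p}"

text \<open>Quotient of the (Euclidean) division of a by b in Z[x] (b monic).\<close>
definition int_quot :: "int poly \<Rightarrow> int poly \<Rightarrow> int poly" where
  "int_quot a b = (THE q. \<exists>r. a = q * b + r \<and> (r = 0 \<or> degree r < degree b))"

end

theory Submission imports Defs "Berlekamp_Zassenhaus.Hensel_Lifting" "Berlekamp_Zassenhaus.Factorize_Rat_Poly" begin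
hide_const (open) module.smult

context poly_mod_prime
begin

lemma Mp_eq_of_diff: "Mp (a - b) = 0 \<Longrightarrow> Mp a = Mp b"
proof -
  assume h: "Mp (a - b) = 0"
  have "Mp a = Mp (Mp (a - b) + b)" by simp
  also have "\<dots> = Mp b" using h by simp
  finally show ?thesis .
qed

lemma monic_mult_small:
  assumes g: "monic g" and eq: "Mp (g * a) = Mp r" and r: "r = 0 \<or> degree r < degree g"
  shows "Mp a = 0"
proof -
  have r0: "Mp r = 0"
  proof (rule ccontr)
    assume nz: "Mp r \<noteq> 0"
    have "g dvdm r" unfolding dvdm_def using eq by metis
    from dvdm_imp_degree_le[OF this g nz m1] r nz show False by auto
  qed
  show ?thesis
  proof (rule ccontr)
    assume nz: "Mp a \<noteq> 0"
    have lc: "lead_coeff (Mp a) mod p \<noteq> 0"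
      by (metis Mp_Mp Mp_coeff leading_coeff_neq_0 M_def nz)
    have "coeff (g * Mp a) (degree g + degree (Mp a)) = lead_coeff (Mp a)"
      using g by (simp add: coeff_mult_degree_sum)
    hence "coeff (Mp (g * Mp a)) (degree g + degree (Mp a)) \<noteq> 0"
      using lc unfolding Mp_coeff[of "g * Mp a"] by (simp add: M_def)
    moreover have "Mp (g * Mp a) = 0" using eq r0 by simp
    ultimately show False by simp
  qed
qed

lemma monic_cancel:
  assumes g: "monic g" and eq: "Mp (g * a) = Mp (g * b)"
  shows "Mp a = Mp b"
proof -
  have "Mp (g * (a - b)) = Mp (Mp (g * a) - Mp (g * b))" by (simp add: algebra_simps)
  also have "\<dots> = Mp 0" using eq by simp
  finally have "Mp (a - b) = 0" using monic_mult_small[OF g, of "a - b" 0] by simp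
  thus ?thesis by (rule Mp_eq_of_diff)
qed

lemma dvdm_mult_left: "g dvdm (g * x)"
  unfolding dvdm_def by auto

lemma dvdm_Mp_right: "Mp a = Mp b \<Longrightarrow> g dvdm a \<Longrightarrow> g dvdm b"
  unfolding dvdm_def by auto

lemma dvdm_mult_right: "g dvdm a \<Longrightarrow> g dvdm (a * x)"
  unfolding dvdm_def
proof -
  assume "\<exists>h. Mp a = Mp (g * h)"
  then obtain h where "Mp a = Mp (g * h)" by auto
  hence "Mp (a * x) = Mp (g * (h * x))" by (metis mult_Mp(1) mult.assoc)
  thus "\<exists>h. Mp (a * x) = Mp (g * h)" by auto
qed

lemma dvdm_diff: "g dvdm a \<Longrightarrow> g dvdm b \<Longrightarrow> g dvdm (a - b)"
  by (metis dvdm_add dvdm_uminus diff_conv_add_uminus)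

lemma bezout_m:
  assumes cop: "coprime_m g h"
  shows "\<exists>u v. Mp (g * u + h * v) = 1"
proof -
  define S where "S = {d. \<exists>u v. d = Mp (g * u + h * v)}"
  have ex: "\<exists>d. d \<in> S \<and> d \<noteq> 0"
  proof (rule ccontr)
    assume nex: "\<not> ?thesis"
    have "Mp g \<in> S" unfolding S_def by (intro CollectI exI[of _ 1] exI[of _ 0]) simp
    hence g0: "Mp g = 0" using nex by auto
    have "Mp h \<in> S" unfolding S_def by (intro CollectI exI[of _ 0] exI[of _ 1]) simp
    hence h0: "Mp h = 0" using nex by auto
    have "monom 1 1 dvdm g" unfolding dvdm_def using g0 by (intro exI[of _ 0]) simp
    moreover have "monom 1 1 dvdm h" unfolding dvdm_def using h0 by (intro exI[of _ 0]) simp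
    ultimately have "monom 1 1 dvdm 1" using cop unfolding coprime_m_def by blast
    from dvdm_imp_degree_le[OF this _ _ m1] show False by (simp add: degree_monom_eq)
  qed
  define k where "k = (LEAST k. \<exists>d. d \<in> S \<and> d \<noteq> 0 \<and> degree d = k)"
  have "\<exists>d. d \<in> S \<and> d \<noteq> 0 \<and> degree d = k" unfolding k_def
    by (rule LeastI_ex, insert ex, blast)
  then obtain d where dS: "d \<in> S" "d \<noteq> 0" "degree d = k" by blast
  have min: "k \<le> degree d'" if "d' \<in> S" "d' \<noteq> 0" for d'
    unfolding k_def by (rule Least_le, insert that, blast)
  from dS(1) obtain u v where d: "d = Mp (g * u + h * v)" unfolding S_def by auto
  define lc where "lc = lead_coeff d"
  have lcM: "M lc = lc" unfolding lc_def d by (simp add: Mp_coeff)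
  have lc0: "lc \<noteq> 0" unfolding lc_def using dS(2) leading_coeff_0_iff by blast
  have lcr1: "0 \<le> lc mod p" "lc mod p < p" using m1 by auto
  have lcr: "0 < lc" "lc < p" using lcM lc0 lcr1 unfolding M_def by auto
  have "coprime p lc" using prime lcr by (auto intro: prime_imp_coprime dest: zdvd_not_zless)
  hence coplc: "coprime lc p" by (simp add: ac_simps)
  define iv where "iv = inverse_mod lc p"
  have iv: "M (iv * lc) = 1" unfolding iv_def by (rule inverse_mod_coprime[OF prime coplc])
  define u' v' where "u' = smult iv u" and "v' = smult iv v"
  define d' where "d' = Mp (smult iv d)"
  have d'eq: "d' = Mp (g * u' + h * v')" unfolding d'_def d u'_def v'_def
    by (simp add: smult_add_right)
  have d'S: "d' \<in> S" unfolding S_def d'eq by blast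
  have cd': "coeff d' (degree d) = 1" unfolding d'_def Mp_coeff using iv lc_def by simp
  have "degree d' \<le> degree d" unfolding d'_def
    by (rule le_trans[OF degree_m_le degree_smult_le])
  moreover have "degree d \<le> degree d'" using cd' by (intro le_degree) simp
  ultimately have degd': "degree d' = degree d" by simp
  have mond': "monic d'" using cd' degd' by simp
  have d'0: "d' \<noteq> 0" using mond' by auto
  have Mpd': "Mp d' = d'" unfolding d'_def by simp
  have dv: "d' dvdm t" if t: "Mp t = Mp (g * a + h * b)" for t a b
  proof -
    obtain q r where qr: "pdivmod_monic t d' = (q, r)" by force
    from pdivmod_monic[OF mond' qr] have tqr: "t = d' * q + r" and r: "r = 0 \<or> degree r < degree d'"
      by auto
    have "Mp r = Mp (t - d' * q)" unfolding tqr by simp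
    also have "\<dots> = Mp (Mp t - Mp d' * q)" unfolding Mpd' by (simp only: minus_Mp(1))
    also have "\<dots> = Mp (Mp (g * a + h * b) - Mp (g * u' + h * v') * q)"
      by (simp only: t Mpd', simp only: d'eq)
    also have "\<dots> = Mp (Mp (g * a + h * b) - Mp (Mp (g * u' + h * v') * q))" by (simp only: minus_Mp(2))
    also have "\<dots> = Mp (Mp (g * a + h * b) - Mp ((g * u' + h * v') * q))" by (simp only: mult_Mp(1))
    also have "\<dots> = Mp ((g * a + h * b) - (g * u' + h * v') * q)" by (simp only: minus_Mp)
    also have "\<dots> = Mp (g * (a - u' * q) + h * (b - v' * q))" by (simp add: algebra_simps)
    finally have "Mp r \<in> S" unfolding S_def by blast
    have "Mp r = 0"
    proof (rule ccontr)
      assume nz: "Mp r \<noteq> 0"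
      hence "r \<noteq> 0" by auto
      with r have "degree r < degree d'" by auto
      moreover have "degree (Mp r) \<le> degree r" by (rule degree_m_le)
      moreover have "k \<le> degree (Mp r)" by (rule min[OF \<open>Mp r \<in> S\<close> nz])
      ultimately show False using degd' dS(3) by simp
    qed
    hence "Mp t = Mp (d' * q)" unfolding tqr by (metis add.right_neutral plus_Mp(2) Mp_0)
    thus ?thesis unfolding dvdm_def by auto
  qed
  have "d' dvdm g" by (rule dv[of g 1 0], simp)
  moreover have "d' dvdm h" by (rule dv[of h 0 1], simp)
  ultimately have "d' dvdm 1" using cop unfolding coprime_m_def by blast
  from dvdm_imp_degree_le[OF this mond' _ m1] have "degree d' = 0" by simp
  then obtain c where c: "d' = [:c:]" by (rule degree_eq_zeroE)
  hence "c = 1" using mond' by simp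
  hence "d' = 1" using c by (simp add: pCons_one)
  thus ?thesis using d'eq by (intro exI[of _ u'] exI[of _ v']) simp
qed

lemma bezout_euclid:
  assumes uv: "Mp (g * u + h * v) = 1" and d: "g dvdm (h * S)"
  shows "g dvdm S"
proof -
  obtain T where T: "Mp (h * S) = Mp (g * T)" using d unfolding dvdm_def by auto
  have "Mp S = Mp ((g * u + h * v) * S)"
    by (metis Mp_1 mult_Mp(1) uv mult_1)
  also have "\<dots> = Mp (g * (u * S) + v * (h * S))" by (simp add: algebra_simps)
  also have "\<dots> = Mp (g * (u * S) + v * Mp (h * S))" by (metis plus_Mp(2) mult_Mp(2))
  also have "\<dots> = Mp (g * (u * S) + v * Mp (g * T))" unfolding T ..
  also have "\<dots> = Mp (g * (u * S) + v * (g * T))" by (metis plus_Mp(2) mult_Mp(2))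
  also have "\<dots> = Mp (g * (u * S + v * T))" by (simp add: algebra_simps)
  finally show ?thesis unfolding dvdm_def by auto
qed

lemma bezout_euclid_pow:
  assumes uv: "\<exists>u v. Mp (g * u + h * v) = 1"
  shows "g dvdm (h ^ k * S) \<Longrightarrow> g dvdm S"
proof (induction k arbitrary: S)
  case 0 thus ?case by simp
next
  case (Suc k)
  from uv obtain u v where uv': "Mp (g * u + h * v) = 1" by auto
  have "g dvdm (h * (h ^ k * S))" using Suc.prems by (simp add: ac_simps)
  from bezout_euclid[OF uv' this] show ?case by (rule Suc.IH)
qed

lemma coprime_prod_cancel:
  assumes "finite A"
  shows "(\<forall>i\<in>A. \<exists>u v. Mp (g * u + c i * v) = 1) \<Longrightarrow> g dvdm ((\<Prod>i\<in>A. c i ^ e i) * S) \<Longrightarrow> g dvdm S"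
  using assms
proof (induction A arbitrary: S rule: finite_induct)
  case empty thus ?case by simp
next
  case (insert x F)
  have "g dvdm (c x ^ e x * ((\<Prod>i\<in>F. c i ^ e i) * S))"
    using insert.prems(2) insert.hyps by (simp add: ac_simps)
  from bezout_euclid_pow[OF _ this] insert.prems(1)
  have "g dvdm ((\<Prod>i\<in>F. c i ^ e i) * S)" by auto
  thus ?case using insert.IH insert.prems(1) by auto
qed

lemma pow_dvdm_cancel:
  assumes g: "monic g" and C: "\<forall>S. g dvdm (C * S) \<longrightarrow> g dvdm S"
  shows "(g ^ l) dvdm (C * S) \<Longrightarrow> (g ^ l) dvdm S"
proof (induction l arbitrary: S)
  case 0 thus ?case unfolding dvdm_def by (intro exI[of _ S]) simp
next
  case (Suc l)
  from Suc.prems obtain h where h: "Mp (C * S) = Mp (g * (g ^ l * h))"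
    unfolding dvdm_def by (auto simp: ac_simps)
  hence "g dvdm (C * S)" unfolding dvdm_def by auto
  with C have "g dvdm S" by auto
  then obtain S' where S': "Mp S = Mp (g * S')" unfolding dvdm_def by auto
  have "Mp (g * (C * S')) = Mp (C * (g * S'))" by (simp add: ac_simps)
  also have "\<dots> = Mp (C * S)" by (metis S' mult_Mp(2))
  finally have "Mp (g * (C * S')) = Mp (g * (g ^ l * h))" using h by simp
  from monic_cancel[OF g this] have "(g ^ l) dvdm (C * S')" unfolding dvdm_def by auto
  from Suc.IH[OF this] obtain h' where h': "Mp S' = Mp (g ^ l * h')" unfolding dvdm_def by auto
  have "Mp S = Mp (g * Mp S')" using S' by simp
  also have "\<dots> = Mp (g ^ Suc l * h')" unfolding h' by (simp add: ac_simps)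
  finally show ?case unfolding dvdm_def by auto
qed

lemma digits_zero:
  assumes g: "monic g" and A: "\<forall>j\<in>{1..l}. A j = 0 \<or> degree (A j) < degree g"
  shows "(g ^ l) dvdm (\<Sum>j=1..l. g ^ (l - j) * A j) \<Longrightarrow> \<forall>j\<in>{1..l}. Mp (A j) = 0"
  using A
proof (induction l)
  case 0 thus ?case by simp
next
  case (Suc l)
  define S' where "S' = (\<Sum>j=1..l. g ^ (l - j) * A j)"
  have split: "(\<Sum>j=1..Suc l. g ^ (Suc l - j) * A j) = g * S' + A (Suc l)"
  proof -
    have "(\<Sum>j=1..Suc l. g ^ (Suc l - j) * A j) = (\<Sum>j=1..l. g ^ (Suc l - j) * A j) + A (Suc l)"
      by simp
    moreover have "(\<Sum>j=1..l. g ^ (Suc l - j) * A j) = (\<Sum>j=1..l. g * (g ^ (l - j) * A j))"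
      by (rule sum.cong, auto simp: Suc_diff_le)
    ultimately show ?thesis unfolding S'_def by (simp add: sum_distrib_left)
  qed
  from Suc.prems(1) obtain h where h: "Mp (g * S' + A (Suc l)) = Mp (g * (g ^ l * h))"
    unfolding dvdm_def split by (auto simp: ac_simps)
  hence "g dvdm (g * S' + A (Suc l))" unfolding dvdm_def by auto
  from dvdm_diff[OF this dvdm_mult_left[of g S']] have "g dvdm A (Suc l)" by simp
  then obtain T where T: "Mp (A (Suc l)) = Mp (g * T)" unfolding dvdm_def by auto
  have "Mp T = 0"
    by (rule monic_mult_small[OF g T[symmetric]], insert Suc.prems(2), auto)
  hence A0: "Mp (A (Suc l)) = 0" using T by (metis Mp_0 mult_Mp(2) mult_zero_right)
  have "Mp (g * S' + A (Suc l)) = Mp (g * S')" by (metis A0 plus_Mp(2) add_0_right Mp_0)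
  with h have "Mp (g * S') = Mp (g * (g ^ l * h))" by simp
  from monic_cancel[OF g this] have "(g ^ l) dvdm S'" unfolding dvdm_def by auto
  from Suc.IH[OF this[unfolded S'_def]] Suc.prems(2) have "\<forall>j\<in>{1..l}. Mp (A j) = 0" by auto
  with A0 show ?case by (auto simp: le_Suc_eq)
qed

lemma Mp_sum_cong: "(\<And>x. x \<in> A \<Longrightarrow> Mp (f x) = Mp (h x)) \<Longrightarrow> Mp (sum f A) = Mp (sum h A)"
proof (induction A rule: infinite_finite_induct)
  case (insert x F)
  have "Mp (sum f (insert x F)) = Mp (Mp (f x) + Mp (sum f F))" using insert.hyps by simp
  also have "\<dots> = Mp (Mp (h x) + Mp (sum h F))" using insert by auto
  also have "\<dots> = Mp (sum h (insert x F))" using insert.hyps by simp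
  finally show ?case .
qed auto

lemma quot_mod:
  assumes b: "monic b" and f: "f = q * b + r" and r: "r = 0 \<or> degree r < degree b"
    and fh: "Mp f = Mp (h * b)"
  shows "Mp q = Mp h"
proof -
  have "Mp (b * (q - h)) = Mp (f - (h * b + r))" unfolding f by (simp add: algebra_simps)
  also have "\<dots> = Mp (Mp f - (h * b + r))" by (simp only: minus_Mp(1))
  also have "\<dots> = Mp (Mp (h * b) - (h * b + r))" unfolding fh ..
  also have "\<dots> = Mp (- r)" by (simp only: minus_Mp(1), simp)
  finally have "Mp (q - h) = 0" by (rule monic_mult_small[OF b], insert r, auto)
  thus ?thesis by (rule Mp_eq_of_diff)
qed

end

lemma int_quot_unique:
  fixes q1 q2 r1 r2 b :: "int poly"
  assumes b: "monic b" and eq: "q1 * b + r1 = q2 * b + r2"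
    and r1: "r1 = 0 \<or> degree r1 < degree b" and r2: "r2 = 0 \<or> degree r2 < degree b"
  shows "q1 = q2"
proof (rule ccontr)
  assume ne: "q1 \<noteq> q2"
  have b0: "b \<noteq> 0" using b by auto
  have e: "(q1 - q2) * b = r2 - r1" using eq by (simp add: algebra_simps)
  have nz: "(q1 - q2) * b \<noteq> 0" using ne b0 by auto
  have "degree ((q1 - q2) * b) = degree (q1 - q2) + degree b"
    by (rule degree_mult_eq, insert ne b0, auto)
  hence "degree b \<le> degree (r2 - r1)" using e by simp
  moreover have "degree (r2 - r1) \<le> max (degree r2) (degree r1)" by (rule degree_diff_le_max)
  moreover have "r2 - r1 \<noteq> 0" using e nz by simp
  ultimately show False using r1 r2 by auto
qed

lemma int_quot:
  assumes b: "monic b"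
  shows "\<exists>r. f = int_quot f b * b + r \<and> (r = 0 \<or> degree r < degree b)"
proof -
  obtain q r where qr: "pdivmod_monic f b = (q, r)" by force
  from pdivmod_monic[OF b qr] have f: "f = q * b + r" and r: "r = 0 \<or> degree r < degree b"
    by (auto simp: ac_simps)
  have "int_quot f b = q" unfolding int_quot_def
  proof (rule the_equality)
    show "\<exists>r. f = q * b + r \<and> (r = 0 \<or> degree r < degree b)" using f r by blast
    fix q' assume "\<exists>r'. f = q' * b + r' \<and> (r' = 0 \<or> degree r' < degree b)"
    then obtain r' where "f = q' * b + r'" "r' = 0 \<or> degree r' < degree b" by auto
    thus "q' = q" using int_quot_unique[OF b _ _ r, of q' r'] f by auto
  qed
  thus ?thesis using f r by auto
qed

lemma int_quot_degree:
  assumes b: "monic b" and f0: "f \<noteq> 0" and d: "degree b \<le> degree f"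
  shows "degree (int_quot f b) + degree b = degree f"
proof -
  obtain r where f: "f = int_quot f b * b + r" and r: "r = 0 \<or> degree r < degree b"
    using int_quot[OF b] by blast
  define q where "q = int_quot f b"
  have b0: "b \<noteq> 0" using b by auto
  have q0: "q \<noteq> 0"
  proof
    assume "q = 0" hence "f = r" using f q_def by simp
    with r f0 d show False by auto
  qed
  have dq: "degree (q * b) = degree q + degree b" by (rule degree_mult_eq, insert q0 b0, auto)
  have "degree (q * b + r) = degree (q * b)"
  proof (cases "r = 0")
    case False thus ?thesis by (intro degree_add_eq_left, insert r dq q0, auto)
  qed simp
  thus ?thesis using f dq q_def by simp
qed



lemma coeff_digit0:
  "(\<Sum>k<(d::nat). c k * (if k = t then 1 else (0::int))) = (if t < d then c t else 0)"
  by (induction d) (auto simp: less_Suc_eq)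

lemma coeff_digit:
  "coeff (\<Sum>k<d. smult (c k) (monom (1::int) k)) t = (if t < d then c t else 0)"
  unfolding coeff_sum by (simp add: coeff_monom coeff_digit0)

lemma sum_Sigma3:
  fixes \<phi> :: "'a \<times> 'b \<times> 'c \<Rightarrow> 'd::comm_monoid_add"
  assumes "finite A" "\<And>i. i \<in> A \<Longrightarrow> finite (B i)" "\<And>i j. i \<in> A \<Longrightarrow> j \<in> B i \<Longrightarrow> finite (C i j)"
  shows "(\<Sum>x\<in>Sigma A (\<lambda>i. Sigma (B i) (C i)). \<phi> x) = (\<Sum>i\<in>A. \<Sum>j\<in>B i. \<Sum>k\<in>C i j. \<phi> (i,j,k))"
proof -
  have "(\<Sum>i\<in>A. \<Sum>j\<in>B i. \<Sum>k\<in>C i j. \<phi> (i,j,k)) = (\<Sum>i\<in>A. \<Sum>jk\<in>Sigma (B i) (C i). \<phi> (i,jk))"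
    by (intro sum.cong refl, subst sum.Sigma, insert assms, auto simp: split_def)
  also have "\<dots> = (\<Sum>x\<in>Sigma A (\<lambda>i. Sigma (B i) (C i)). \<phi> x)"
    by (subst sum.Sigma, insert assms, auto simp: split_def)
  finally show ?thesis ..
qed

lemma digit_small:
  assumes "d > 0"
  shows "(\<Sum>k<d. smult (c k) (monom (1::int) k)) = 0 \<or> degree (\<Sum>k<d. smult (c k) (monom (1::int) k)) < d"
proof -
  have "degree (\<Sum>k<d. smult (c k) (monom (1::int) k)) \<le> d - 1"
    by (rule degree_le, auto simp: coeff_digit)
  thus ?thesis using assms by auto
qed

lemma part4:
  fixes f :: "int poly" and p :: int and m :: nat and g :: "nat \<Rightarrow> int poly" and l :: "nat \<Rightarrow> nat"
  assumes p: "prime p"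
    and gm: "\<forall>i<m. monic (g i) \<and> degree (g i) > 0"
    and fp: "poly_mod.Mp p f = poly_mod.Mp p (\<Prod>i<m. g i ^ l i)"
    and cop: "\<forall>i<m. \<forall>i'<m. i \<noteq> i' \<longrightarrow> poly_mod.coprime_m p (g i) (g i')"
    and I: "I = {(i, j, k). i < m \<and> 1 \<le> j \<and> j \<le> l i \<and> k < degree (g i)}"
    and mp0: "poly_mod.Mp p (\<Sum>x\<in>I. case x of (i, j, k) \<Rightarrow> smult (c x) (int_quot f (g i ^ j) * monom 1 k)) = 0"
  shows "\<forall>x\<in>I. p dvd c x"
proof -
  interpret poly_mod_prime p using p by unfold_locales
  define Q where "Q i j = int_quot f (g i ^ j)" for i j
  define A where "A i j = (\<Sum>k<degree (g i). smult (c (i,j,k)) (monom (1::int) k))" for i j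
  define C where "C i = (\<Prod>i'\<in>{..<m} - {i}. g i' ^ l i')" for i
  define H where "H i j = C i * g i ^ (l i - j)" for i j
  have Ieq: "I = Sigma {..<m} (\<lambda>i. Sigma {1..l i} (\<lambda>j. {..<degree (g i)}))"
    unfolding I by auto
  have sum1: "(\<Sum>x\<in>I. case x of (i, j, k) \<Rightarrow> smult (c x) (int_quot f (g i ^ j) * monom 1 k))
     = (\<Sum>i<m. \<Sum>j=1..l i. Q i j * A i j)"
    unfolding Ieq Q_def A_def
    by (subst sum_Sigma3, auto simp: sum_distrib_left)
  have P: "(\<Prod>i<m. g i ^ l i) = g i ^ l i * C i" if "i < m" for i
    unfolding C_def using that by (simp add: prod.remove)
  have QH: "Mp (Q i j) = Mp (H i j)" if i: "i < m" and j: "1 \<le> j" "j \<le> l i" for i j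
  proof -
    have mon: "monic (g i ^ j)" using gm i by (simp add: monic_power)
    obtain r where fr: "f = Q i j * g i ^ j + r" and r: "r = 0 \<or> degree r < degree (g i ^ j)"
      using int_quot[OF mon, of f] unfolding Q_def by blast
    have "H i j * g i ^ j = C i * (g i ^ (l i - j) * g i ^ j)" unfolding H_def by (simp add: ac_simps)
    also have "\<dots> = C i * g i ^ l i" using j by (simp flip: power_add)
    also have "\<dots> = (\<Prod>i<m. g i ^ l i)" using P[OF i] by (simp add: ac_simps)
    finally have "Mp f = Mp (H i j * g i ^ j)" using fp by simp
    from quot_mod[OF mon fr r this] show ?thesis .
  qed
  have step2: "Mp (\<Sum>i<m. \<Sum>j=1..l i. H i j * A i j) = 0"
  proof -
    have "Mp (\<Sum>i<m. \<Sum>j=1..l i. H i j * A i j) = Mp (\<Sum>i<m. \<Sum>j=1..l i. Q i j * A i j)"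
      by (intro Mp_sum_cong, insert QH, auto) (metis mult_Mp(1))
    thus ?thesis using mp0 sum1 by simp
  qed
  show ?thesis
  proof
    fix x assume x: "x \<in> I"
    then obtain i0 j0 k0 where xx: "x = (i0, j0, k0)" and i0: "i0 < m" and j0: "1 \<le> j0" "j0 \<le> l i0"
      and k0: "k0 < degree (g i0)" unfolding I by auto
    define G where "G = g i0"
    define L where "L = l i0"
    have monG: "monic G" using gm i0 G_def by auto
    define S where "S = (\<Sum>j=1..L. G ^ (L - j) * A i0 j)"
    define D where "D i = (\<Prod>i'\<in>{..<m} - {i} - {i0}. g i' ^ l i')" for i
    define B where "B = (\<Sum>i\<in>{..<m} - {i0}. \<Sum>j=1..l i. D i * g i ^ (l i - j) * A i j)"
    have Ci: "C i = G ^ L * D i" if "i < m" "i \<noteq> i0" for i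
    proof -
      have "i0 \<in> {..<m} - {i}" using that i0 by auto
      thus ?thesis unfolding C_def D_def G_def L_def by (simp add: prod.remove)
    qed
    have "(\<Sum>i<m. \<Sum>j=1..l i. H i j * A i j) = (\<Sum>j=1..l i0. H i0 j * A i0 j)
       + (\<Sum>i\<in>{..<m} - {i0}. \<Sum>j=1..l i. H i j * A i j)"
      using i0 by (simp add: sum.remove)
    also have "(\<Sum>j=1..l i0. H i0 j * A i0 j) = C i0 * S"
      unfolding S_def H_def G_def L_def by (simp add: sum_distrib_left ac_simps)
    also have "(\<Sum>i\<in>{..<m} - {i0}. \<Sum>j=1..l i. H i j * A i j) = G ^ L * B"
      unfolding B_def H_def sum_distrib_left
      by (intro sum.cong refl, insert Ci, auto simp: ac_simps)
    finally have z: "Mp (C i0 * S + G ^ L * B) = 0" using step2 by simp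
    have "Mp (C i0 * S) = Mp ((C i0 * S + G ^ L * B) - G ^ L * B)" by simp
    also have "\<dots> = Mp (Mp (C i0 * S + G ^ L * B) - G ^ L * B)" by (simp only: minus_Mp(1))
    also have "\<dots> = Mp (G ^ L * (- B))" unfolding z by simp
    finally have "Mp (C i0 * S) = Mp (G ^ L * (- B))" .
    hence dv: "(G ^ L) dvdm (C i0 * S)" unfolding dvdm_def by (intro exI[of _ "- B"])
    have Ccop: "\<forall>S. G dvdm (C i0 * S) \<longrightarrow> G dvdm S"
    proof (intro allI impI)
      fix S assume "G dvdm (C i0 * S)"
      have bz: "\<forall>i\<in>{..<m} - {i0}. \<exists>u v. Mp (G * u + g i * v) = 1"
      proof
        fix i assume "i \<in> {..<m} - {i0}"
        hence "coprime_m G (g i)" using cop i0 G_def by auto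
        thus "\<exists>u v. Mp (G * u + g i * v) = 1" by (rule bezout_m)
      qed
      show "G dvdm S" by (rule coprime_prod_cancel[OF _ bz], simp, insert \<open>G dvdm (C i0 * S)\<close>, unfold C_def)
    qed
    from pow_dvdm_cancel[OF monG Ccop dv]
    have "(G ^ L) dvdm S" .
    from digits_zero[OF monG _ this[unfolded S_def]]
    have "\<forall>j\<in>{1..L}. Mp (A i0 j) = 0"
      using digit_small gm i0 unfolding A_def G_def by auto
    hence "Mp (A i0 j0) = 0" using j0 L_def by auto
    hence "coeff (Mp (A i0 j0)) k0 = 0" by simp
    hence "M (c (i0, j0, k0)) = 0" unfolding Mp_coeff A_def coeff_digit using k0 by simp
    thus "p dvd c x" unfolding xx M_def by auto
  qed
qed



lemma common_denom:
  fixes c :: "'a \<Rightarrow> rat"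
  assumes "finite I"
  shows "\<exists>d a. d > 0 \<and> (\<forall>x\<in>I. c x = of_int (a x) / of_int d)"
  using assms
proof (induction I rule: finite_induct)
  case empty show ?case by (intro exI[of _ 1], auto)
next
  case (insert y F)
  then obtain d a where d: "d > 0" and a: "\<forall>x\<in>F. c x = of_int (a x) / of_int d" by auto
  obtain n e where ne: "quotient_of (c y) = (n, e)" by force
  have e: "e > 0" using quotient_of_denom_pos[OF ne] .
  have cy: "c y = of_int n / of_int e" using quotient_of_div[OF ne] .
  show ?case
  proof (intro exI[of _ "d * e"] exI[of _ "\<lambda>x. if x = y then n * d else a x * e"] conjI)
    show "d * e > 0" using d e by simp
    show "\<forall>x\<in>insert y F. c x = rat_of_int (if x = y then n * d else a x * e) / rat_of_int (d * e)"
      using a cy d e by auto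
  qed
qed

lemma pow_gt_int: "(p::int) \<ge> 2 \<Longrightarrow> int k < p ^ k"
proof -
  assume p: "p \<ge> 2"
  have "k < 2 ^ k" by (rule less_exp)
  hence "int k < int (2 ^ k)" by linarith
  hence "int k < 2 ^ k" by simp
  also have "(2::int) ^ k \<le> p ^ k" using p by (intro power_mono, auto)
  finally show ?thesis .
qed

lemma rat_indep:
  fixes W :: "'a \<Rightarrow> int poly" and p :: int
  assumes fin: "finite I" and p: "prime p"
    and P4: "\<forall>a. poly_mod.Mp p (\<Sum>x\<in>I. smult (a x) (W x)) = 0 \<longrightarrow> (\<forall>x\<in>I. p dvd a x)"
    and sum0: "(\<Sum>x\<in>I. smult (c x) (of_int_poly (W x) :: rat poly)) = 0"
  shows "\<forall>x\<in>I. c x = 0"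
proof -
  obtain d a where d: "d > 0" and a: "\<forall>x\<in>I. c x = of_int (a x) / of_int d"
    using common_denom[OF fin] by blast
  have "of_int_poly (\<Sum>x\<in>I. smult (a x) (W x)) = (\<Sum>x\<in>I. smult (of_int d * c x) (of_int_poly (W x) :: rat poly))"
    unfolding of_int_poly_hom.hom_sum of_int_hom.map_poly_hom_smult
    by (intro sum.cong refl, insert a d, auto)
  also have "\<dots> = smult (of_int d) (\<Sum>x\<in>I. smult (c x) (of_int_poly (W x) :: rat poly))"
    by (simp add: smult_sum2 smult_smult)
  also have "\<dots> = 0" using sum0 by simp
  finally have zero: "(\<Sum>x\<in>I. smult (a x) (W x)) = 0" by simp
  have p0: "p \<noteq> 0" and p2: "p \<ge> 2" using p prime_ge_2_int by auto
  have pk: "\<forall>a. (\<Sum>x\<in>I. smult (a x) (W x)) = 0 \<longrightarrow> (\<forall>x\<in>I. p ^ k dvd a x)" for k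
  proof (induction k)
    case 0 thus ?case by simp
  next
    case (Suc k)
    show ?case
    proof (intro allI impI)
      fix a :: "'a \<Rightarrow> int"
      assume z: "(\<Sum>x\<in>I. smult (a x) (W x)) = 0"
      hence dv: "\<forall>x\<in>I. p dvd a x" using P4 by (auto simp: poly_mod.Mp_0)
      define b where "b x = a x div p" for x
      have ab: "a x = p * b x" if "x \<in> I" for x using dv that unfolding b_def by auto
      have "(\<Sum>x\<in>I. smult (a x) (W x)) = smult p (\<Sum>x\<in>I. smult (b x) (W x))"
        unfolding smult_sum2 by (intro sum.cong refl, auto simp: ab)
      with z p0 have "(\<Sum>x\<in>I. smult (b x) (W x)) = 0" by simp
      with Suc.IH have "\<forall>x\<in>I. p ^ k dvd b x" by auto
      thus "\<forall>x\<in>I. p ^ Suc k dvd a x" using ab by auto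
    qed
  qed
  show ?thesis
  proof
    fix x assume x: "x \<in> I"
    have "a x = 0"
    proof (rule ccontr)
      assume nz: "a x \<noteq> 0"
      have "p ^ nat \<bar>a x\<bar> dvd a x" using pk zero x by blast
      from dvd_imp_le_int[OF nz this] have "\<bar>p ^ nat \<bar>a x\<bar>\<bar> \<le> \<bar>a x\<bar>" .
      moreover have "int (nat \<bar>a x\<bar>) < p ^ nat \<bar>a x\<bar>" by (rule pow_gt_int[OF p2])
      ultimately show False by simp
    qed
    thus "c x = 0" using a x by simp
  qed
qed



lemma rat_span:
  fixes Wq :: "'a \<Rightarrow> rat poly" and I :: "'a set"
  assumes fin: "finite I" and cardI: "card I = n"
    and deg: "\<forall>x\<in>I. degree (Wq x) < n"
    and indep: "\<forall>c. (\<Sum>x\<in>I. smult (c x) (Wq x)) = 0 \<longrightarrow> (\<forall>x\<in>I. c x = 0)"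
    and R: "degree R < n"
  shows "\<exists>c. R = (\<Sum>x\<in>I. smult (c x) (Wq x))"
proof -
  interpret V: vector_space "smult :: rat \<Rightarrow> rat poly \<Rightarrow> rat poly"
    by unfold_locales (simp_all add: smult_add_right smult_add_left)
  have inj: "inj_on Wq I"
  proof (rule inj_onI, rule ccontr)
    fix x y assume x: "x \<in> I" and y: "y \<in> I" and eq: "Wq x = Wq y" and ne: "x \<noteq> y"
    define c where "c z = (if z = x then 1 else if z = y then -1 else (0::rat))" for z
    have "(\<Sum>z\<in>I. smult (c z) (Wq z)) = (\<Sum>z\<in>{x,y}. smult (c z) (Wq z))"
      by (rule sum.mono_neutral_right, insert fin x y, auto simp: c_def)
    also have "\<dots> = 0" using ne eq by (simp add: c_def)
    finally have "c x = 0" using indep x by blast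
    thus False by (simp add: c_def)
  qed
  let ?B = "Wq ` I"
  have indB: "V.independent ?B"
    unfolding V.independent_explicit_module
  proof (intro allI impI)
    fix t u v assume t: "finite t" "t \<subseteq> ?B" and s: "(\<Sum>v\<in>t. smult (u v) v) = 0" and v: "v \<in> t"
    define c where "c x = (if Wq x \<in> t then u (Wq x) else 0)" for x
    have "(\<Sum>x\<in>I. smult (c x) (Wq x)) = (\<Sum>w\<in>?B. smult (if w \<in> t then u w else 0) w)"
      unfolding c_def by (subst sum.reindex[OF inj], simp)
    also have "\<dots> = (\<Sum>w\<in>t. smult (u w) w)"
      by (rule sum.mono_neutral_cong_right, insert t fin, auto)
    also have "\<dots> = 0" by (rule s)
    finally have "\<forall>x\<in>I. c x = 0" using indep by blast
    moreover obtain x where "x \<in> I" "v = Wq x" using v t by auto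
    ultimately show "u v = 0" using v unfolding c_def by auto
  qed
  define X where "X = (\<lambda>k. monom (1::rat) k) ` {..<n}"
  have finX: "finite X" and cardX: "card X \<le> n" unfolding X_def
    using card_image_le[of "{..<n}" "\<lambda>k. monom (1::rat) k"] by auto
  have inX: "P \<in> V.span X" if "degree P < n" for P
  proof -
    have n0: "n > 0" using that by auto
    have "P = (\<Sum>k\<le>n - 1. monom (coeff P k) k)"
      by (rule poly_as_sum_of_monoms'[symmetric], insert that, auto)
    also have "\<dots> = (\<Sum>k\<le>n - 1. smult (coeff P k) (monom 1 k))" by (simp add: smult_monom)
    also have "\<dots> \<in> V.span X"
      by (intro V.span_sum V.span_scale V.span_base, insert n0, auto simp: X_def)
    finally show ?thesis .
  qed
  have "R \<in> V.span ?B"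
  proof (rule ccontr)
    assume nR: "R \<notin> V.span ?B"
    hence RB: "R \<notin> ?B" using V.span_base by blast
    have "V.independent (insert R ?B)" by (rule V.independent_insertI[OF nR indB])
    moreover have "insert R ?B \<subseteq> V.span X" using inX R deg by auto
    ultimately have "card (insert R ?B) \<le> card X" using V.independent_span_bound[OF finX] by blast
    moreover have "card (insert R ?B) = n + 1"
      using RB fin card_image[OF inj] cardI by simp
    ultimately show False using cardX by simp
  qed
  then obtain u where "R = (\<Sum>v\<in>?B. smult (u v) v)" unfolding V.span_finite[OF finite_imageI[OF fin]] by auto
  also have "\<dots> = (\<Sum>x\<in>I. smult (u (Wq x)) (Wq x))" by (subst sum.reindex[OF inj], simp)
  finally show ?thesis by (intro exI[of _ "\<lambda>x. u (Wq x)"])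
qed

lemma small_root_zero:
  fixes f :: "int poly" and \<theta> :: complex and R :: "rat poly"
  assumes irr: "irreducible\<^sub>d (of_int_poly f :: rat poly)"
    and root: "poly (of_int_poly f) \<theta> = 0"
    and deg: "degree R < degree f"
    and R0: "poly (map_poly of_rat R) \<theta> = 0"
  shows "R = 0"
proof (rule ccontr)
  assume nz: "R \<noteq> 0"
  interpret h: map_poly_comm_ring_hom "of_rat :: rat \<Rightarrow> complex" ..
  define F where "F = (of_int_poly f :: rat poly)"
  have F0: "F \<noteq> 0" using irr F_def by auto
  have dF: "degree F = degree f" unfolding F_def by simp
  have Fth: "poly (map_poly of_rat F) \<theta> = 0"
  proof -
    have "map_poly of_rat F = (of_int_poly f :: complex poly)"
      unfolding F_def by (subst map_poly_map_poly, auto simp: o_def)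
    thus ?thesis using root by simp
  qed
  define G where "G = gcd R F"
  obtain u v where uv: "u * R + v * F = G"
    using bezout_coefficients_fst_snd[of R F] unfolding G_def by blast
  have Gth: "poly (map_poly of_rat G) \<theta> = 0"
    unfolding uv[symmetric] by (simp add: h.hom_add h.hom_mult R0 Fth)
  have G0: "G \<noteq> 0" unfolding G_def using nz by simp
  have dG: "degree G \<noteq> 0"
  proof
    assume "degree G = 0"
    then obtain a where Ga: "G = [:a:]" by (rule degree_eq_zeroE)
    hence "a \<noteq> 0" using G0 by auto
    moreover have "map_poly (of_rat :: rat \<Rightarrow> complex) [:a:] = [:of_rat a:]"
      by (rule poly_eqI, simp add: coeff_map_poly coeff_pCons split: nat.split)
    hence "poly (map_poly of_rat G) \<theta> = of_rat a" unfolding Ga by simp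
    ultimately show False using Gth by simp
  qed
  have "G dvd R" unfolding G_def by simp
  hence dGR: "degree G \<le> degree R" using nz by (rule dvd_imp_degree_le)
  have "G dvd F" unfolding G_def by simp
  then obtain H where FGH: "F = G * H" by (auto elim: dvdE)
  have H0: "H \<noteq> 0" using F0 FGH by auto
  have "degree F = degree G + degree H" unfolding FGH by (rule degree_mult_eq, insert G0 H0, auto)
  hence "degree G < degree F" "degree H < degree F" using dG dGR deg dF by auto
  from irreducible\<^sub>dD(2)[OF irr[folded F_def] this] FGH show False by simp
qed

lemma zloc_poly_denom:
  fixes q :: "rat poly" and p :: int
  assumes p: "prime p" and q: "\<forall>i. coeff q i \<in> zloc p"
  shows "\<exists>d Z. d \<noteq> 0 \<and> \<not> p dvd d \<and> of_int_poly Z = smult (of_int d) q"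
  using q
proof (induction q)
  case 0
  have "\<not> p dvd 1" using p by (meson not_prime_unit)
  thus ?case by (intro exI[of _ 1] exI[of _ 0], auto)
next
  case (pCons a q)
  have "\<forall>i. coeff q i \<in> zloc p" using pCons.prems by (metis coeff_pCons_Suc)
  from pCons.IH[OF this] obtain d Z where d: "d \<noteq> 0" "\<not> p dvd d" and Z: "of_int_poly Z = smult (of_int d) q" by auto
  have "a \<in> zloc p" using pCons.prems by (metis coeff_pCons_0)
  then obtain s t where t: "t \<noteq> 0" "\<not> p dvd t" and a: "a = of_int s / of_int t" unfolding zloc_def by auto
  show ?case
  proof (intro exI[of _ "d * t"] exI[of _ "pCons (s * d) (smult t Z)"] conjI)
    show "d * t \<noteq> 0" using d t by auto
    show "\<not> p dvd d * t" using d t p by (simp add: prime_dvd_mult_iff)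
    show "of_int_poly (pCons (s * d) (smult t Z)) = smult (of_int (d * t)) (pCons a q)"
    proof -
      have "of_int_poly (pCons (s * d) (smult t Z)) = pCons (of_int (s * d)) (smult (of_int t) (of_int_poly Z) :: rat poly)"
        by (cases "s * d = 0 \<and> smult t Z = 0", auto simp: map_poly_pCons of_int_hom.map_poly_hom_smult)
      also have "\<dots> = smult (of_int (d * t)) (pCons a q)"
        using t by (simp add: Z a smult_smult ac_simps)
      finally show ?thesis .
    qed
  qed
qed



lemma reduce_p:
  fixes W :: "'a \<Rightarrow> int poly" and p :: int and r :: "int poly"
  assumes p: "prime p"
    and P4: "\<forall>a. poly_mod.Mp p (\<Sum>x\<in>I. smult (a x) (W x)) = 0 \<longrightarrow> (\<forall>x\<in>I. p dvd a x)"
  shows "e > 0 \<Longrightarrow> smult e r = (\<Sum>x\<in>I. smult (a x) (W x)) \<Longrightarrow>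
    \<exists>e' b. e' > 0 \<and> \<not> p dvd e' \<and> smult e' r = (\<Sum>x\<in>I. smult (b x) (W x))
       \<and> (\<forall>x\<in>I. (of_int (a x) / of_int e :: rat) = of_int (b x) / of_int e')"
proof (induction "nat e" arbitrary: e a rule: less_induct)
  case less
  show ?case
  proof (cases "p dvd e")
    case False
    thus ?thesis using less.prems by (intro exI[of _ e] exI[of _ a], auto)
  next
    case True
    interpret poly_mod_prime p using p by unfold_locales
    have p0: "p > 1" using p prime_gt_1_int by auto
    obtain e1 where e1: "e = p * e1" using True by (auto elim: dvdE)
    have e1p: "e1 > 0" using less.prems(1) e1 p0 by (simp add: zero_less_mult_iff)
    have "Mp (\<Sum>x\<in>I. smult (a x) (W x)) = Mp (smult p (smult e1 r))"
      using less.prems(2) e1 by (simp add: smult_smult)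
    also have "\<dots> = 0" by (rule Mp_smult_m_0)
    finally have "\<forall>x\<in>I. p dvd a x" using P4 by auto
    define a1 where "a1 x = a x div p" for x
    have aa: "a x = p * a1 x" if "x \<in> I" for x using \<open>\<forall>x\<in>I. p dvd a x\<close> that unfolding a1_def by auto
    have "smult p (smult e1 r) = smult p (\<Sum>x\<in>I. smult (a1 x) (W x))"
      using less.prems(2) e1 unfolding smult_sum2 smult_smult
      by (simp add: aa cong: sum.cong)
    hence "smult p (smult e1 r - (\<Sum>x\<in>I. smult (a1 x) (W x))) = 0"
      by (simp only: smult_diff_right)
    hence eq1: "smult e1 r = (\<Sum>x\<in>I. smult (a1 x) (W x))" using p0 by simp
    have lt: "nat e1 < nat e" using e1 e1p p0 by simp
    from less.hyps[OF lt e1p eq1] obtain e' b where res: "e' > 0" "\<not> p dvd e'"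
      "smult e' r = (\<Sum>x\<in>I. smult (b x) (W x))"
      "\<forall>x\<in>I. (of_int (a1 x) / of_int e1 :: rat) = of_int (b x) / of_int e'" by blast
    show ?thesis
    proof (intro exI[of _ e'] exI[of _ b] conjI res(1-3) ballI)
      fix x assume x: "x \<in> I"
      have "(of_int (a x) / of_int e :: rat) = of_int (a1 x) / of_int e1"
        using aa[OF x] e1 p0 by simp
      thus "(of_int (a x) / of_int e :: rat) = of_int (b x) / of_int e'" using res(4) x by simp
    qed
  qed
qed

theorem lemma4p4:
  fixes f :: "int poly" and \<theta> :: complex and N p :: int
    and m :: nat and g :: "nat \<Rightarrow> int poly" and l :: "nat \<Rightarrow> nat"
  assumes f_monic: "lead_coeff f = 1"
    and f_irr: "irreducible f"
    and f_deg: "degree f > 1"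
    and root: "poly (map_poly of_int f) \<theta> = 0"
    and N_gt: "N > 1"
    and N_primes: "\<forall>q::int. prime q \<and> q dvd N \<longrightarrow> q > int (degree f)"
    and g_monic: "\<forall>i<m. lead_coeff (g i) = 1 \<and> degree (g i) > 0"
    and l_pos: "\<forall>i<m. l i > 0"
    and fact: "poly_mod.Mp N f = poly_mod.Mp N (\<Prod>i<m. g i ^ l i)"
    and sqfree: "\<forall>q::int. prime q \<and> q dvd N \<longrightarrow>
        (\<forall>i<m. poly_mod.square_free_m q (g i)) \<and>
        (\<forall>i<m. \<forall>i'<m. i \<noteq> i' \<longrightarrow> poly_mod.coprime_m q (g i) (g i'))"
    and p_prime: "prime p" and p_dvd: "p dvd N"
  defines "I \<equiv> {(i, j, k). i < m \<and> 1 \<le> j \<and> j \<le> l i \<and> k < degree (g i)}"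
    and "\<alpha> \<equiv> (\<lambda>(i, j, k). poly (map_poly of_int (int_quot f (g i ^ j))) \<theta> * \<theta> ^ k)"
  shows "(\<forall>x\<in>I. \<alpha> x \<in> zloc_adj p \<theta>)
    \<and> (\<forall>z\<in>zloc_adj p \<theta>. \<exists>c. (\<forall>x\<in>I. c x \<in> zloc p) \<and> z = (\<Sum>x\<in>I. of_rat (c x) * \<alpha> x))
    \<and> (\<forall>c. (\<forall>x\<in>I. c x \<in> zloc p) \<and> (\<Sum>x\<in>I. of_rat (c x) * \<alpha> x) = 0 \<longrightarrow> (\<forall>x\<in>I. c x = 0))
    \<and> (\<forall>c :: nat \<times> nat \<times> nat \<Rightarrow> int.
         poly_mod.Mp p (\<Sum>x\<in>I. case x of (i, j, k) \<Rightarrow>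
            smult (c x) (int_quot f (g i ^ j) * monom 1 k)) = 0
         \<longrightarrow> (\<forall>x\<in>I. p dvd c x))"
proof -
  have gmon: "\<forall>i<m. monic (g i) \<and> degree (g i) > 0" using g_monic by auto
  have p1: "p > 1" using p_prime prime_gt_1_int by auto
  define n where "n = degree f"
  define P where "P = (\<Prod>i<m. g i ^ l i)"
  have monP: "monic P" unfolding P_def by (rule monic_prod, insert gmon, auto simp: monic_power)
  have gne: "g i \<noteq> 0" if "i < m" for i using gmon that by auto
  have degP: "degree P = (\<Sum>i<m. l i * degree (g i))"
  proof -
    have "degree P = (\<Sum>i<m. degree (g i ^ l i))" unfolding P_def
      by (rule degree_prod_eq_sum_degree, insert gne, auto)
    also have "\<dots> = (\<Sum>i<m. l i * degree (g i))"
      by (intro sum.cong refl, insert gne, auto simp: degree_power_eq)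
    finally show ?thesis .
  qed
  interpret pN: poly_mod_2 N using N_gt by unfold_locales
  have "pN.degree_m f = degree f" using f_monic by (rule pN.monic_degree_m)
  moreover have "pN.degree_m P = degree P" using monP by (rule pN.monic_degree_m)
  ultimately have nP: "n = (\<Sum>i<m. l i * degree (g i))" using fact degP unfolding n_def P_def by simp
  have Ieq: "I = Sigma {..<m} (\<lambda>i. {1..l i} \<times> {..<degree (g i)})" unfolding I_def by auto
  have finI: "finite I" unfolding Ieq by auto
  have cardI: "card I = n" unfolding Ieq nP by (subst card_SigmaI, auto simp: card_cartesian_product)
  have n0: "n > 1" using f_deg n_def by auto
  interpret pp: poly_mod_2 p using p1 by unfold_locales
  have fp: "poly_mod.Mp p f = poly_mod.Mp p P"
  proof -
    obtain k where Nk: "N = p * k" using p_dvd by (auto elim: dvdE)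
    have "p * k > 0" using Nk N_gt by simp
    hence k: "k > 0" using p1 by (simp add: zero_less_mult_iff)
    have "poly_mod.Mp p f = poly_mod.Mp p (pN.Mp f)" using pp.Mp_product_modulus[OF Nk k] by simp
    also have "\<dots> = poly_mod.Mp p (pN.Mp P)" using fact P_def by simp
    also have "\<dots> = poly_mod.Mp p P" using pp.Mp_product_modulus[OF Nk k] by simp
    finally show ?thesis .
  qed
  have cop: "\<forall>i<m. \<forall>i'<m. i \<noteq> i' \<longrightarrow> poly_mod.coprime_m p (g i) (g i')"
    using sqfree p_prime p_dvd by blast
  have P4: "poly_mod.Mp p (\<Sum>x\<in>I. case x of (i, j, k) \<Rightarrow> smult (c x) (int_quot f (g i ^ j) * monom 1 k)) = 0
     \<Longrightarrow> \<forall>x\<in>I. p dvd c x" for c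
    by (rule part4[OF p_prime gmon fp[unfolded P_def] cop meta_eq_to_obj_eq[OF I_def]])
  define W where "W x = (case x of (i, j, k) \<Rightarrow> int_quot f (g i ^ j) * monom 1 k)" for x
  define Wq where "Wq x = (of_int_poly (W x) :: rat poly)" for x
  have sumW: "(\<Sum>x\<in>I. case x of (i, j, k) \<Rightarrow> smult (c x) (int_quot f (g i ^ j) * monom 1 k))
     = (\<Sum>x\<in>I. smult (c x) (W x))" for c
    by (intro sum.cong refl, auto simp: W_def split: prod.splits)
  have P4': "\<forall>a. poly_mod.Mp p (\<Sum>x\<in>I. smult (a x) (W x)) = 0 \<longrightarrow> (\<forall>x\<in>I. p dvd a x)"
    using P4 sumW by auto
  have f0: "f \<noteq> 0" using f_monic by auto
  have degW: "degree (W x) < n" if x: "x \<in> I" for x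
  proof -
    obtain i j k where xx: "x = (i,j,k)" "i < m" "1 \<le> j" "j \<le> l i" "k < degree (g i)"
      using x unfolding I_def by auto
    have mb: "monic (g i ^ j)" using gmon xx by (simp add: monic_power)
    have db: "degree (g i ^ j) = j * degree (g i)" using gne[OF xx(2)] by (rule Polynomial.degree_power_eq)
    have "j * degree (g i) \<le> l i * degree (g i)" using xx by simp
    also have "\<dots> \<le> n" unfolding nP using xx(2) by (intro member_le_sum) auto
    finally have le: "degree (g i ^ j) \<le> degree f" using db n_def by simp
    have qd: "degree (int_quot f (g i ^ j)) + degree (g i ^ j) = n"
      using int_quot_degree[OF mb f0 le] n_def by simp
    have "degree (g i) \<le> degree (g i ^ j)" using db xx by simp
    hence kk: "k < degree (g i ^ j)" using xx by simp
    have "degree (W x) \<le> degree (int_quot f (g i ^ j)) + degree (monom (1::int) k)"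
      unfolding W_def xx by (simp add: degree_mult_le)
    also have "\<dots> \<le> degree (int_quot f (g i ^ j)) + k" by (simp add: degree_monom_le)
    finally show ?thesis using qd kk by simp
  qed
  have degWq: "\<forall>x\<in>I. degree (Wq x) < n" using degW unfolding Wq_def by simp
  have indepQ: "\<forall>c. (\<Sum>x\<in>I. smult (c x) (Wq x)) = 0 \<longrightarrow> (\<forall>x\<in>I. c x = 0)"
    using rat_indep[OF finI p_prime P4'] unfolding Wq_def by blast
  have irrQ: "irreducible\<^sub>d (of_int_poly f :: rat poly)"
  proof -
    have "content f dvd 1" using content_dvd_coeff[of f "degree f"] f_monic by simp
    hence "primitive f" by (simp add: is_unit_content_iff)
    from irreducible_primitive_connect[OF this] f_irr have "irreducible\<^sub>d f" by simp
    thus ?thesis by (rule irreducible\<^sub>d_int_rat)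
  qed
  interpret h: map_poly_comm_ring_hom "of_rat :: rat \<Rightarrow> complex" ..
  have ofrat_int: "map_poly (of_rat :: rat \<Rightarrow> complex) (of_int_poly Z) = of_int_poly Z" for Z :: "int poly"
    by (subst map_poly_map_poly, auto simp: o_def)
  have alphaW: "\<alpha> x = poly (of_int_poly (W x)) \<theta>" for x
    unfolding \<alpha>_def W_def
    by (cases x, auto simp: of_int_poly_hom.hom_mult poly_monom)
  have ev_sum: "(\<Sum>x\<in>I. of_rat (c x) * \<alpha> x) = poly (map_poly of_rat (\<Sum>x\<in>I. smult (c x) (Wq x))) \<theta>" for c
    unfolding Wq_def alphaW h.hom_sum of_rat_hom.map_poly_hom_smult ofrat_int poly_sum poly_smult ..
  have ev_int: "(\<Sum>x\<in>I. of_int (b x) * \<alpha> x) = poly (of_int_poly (\<Sum>x\<in>I. smult (b x) (W x))) \<theta>" for b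
    unfolding alphaW of_int_poly_hom.hom_sum of_int_hom.map_poly_hom_smult poly_sum poly_smult ..
  have int_zloc: "of_int a \<in> zloc p" for a
  proof -
    have "\<not> p dvd 1" using p_prime by (meson not_prime_unit)
    thus ?thesis unfolding zloc_def by (intro CollectI exI[of _ a] exI[of _ 1], auto)
  qed
  have part1: "\<forall>x\<in>I. \<alpha> x \<in> zloc_adj p \<theta>"
  proof
    fix x
    show "\<alpha> x \<in> zloc_adj p \<theta>" unfolding zloc_adj_def
      by (intro CollectI exI[of _ "Wq x"] conjI allI, simp add: Wq_def alphaW ofrat_int,
          simp add: Wq_def int_zloc)
  qed
  have part3: "\<forall>c. (\<forall>x\<in>I. c x \<in> zloc p) \<and> (\<Sum>x\<in>I. of_rat (c x) * \<alpha> x) = 0 \<longrightarrow> (\<forall>x\<in>I. c x = 0)"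
  proof (intro allI impI)
    fix c assume "(\<forall>x\<in>I. c x \<in> zloc p) \<and> (\<Sum>x\<in>I. of_rat (c x) * \<alpha> x) = 0"
    hence z: "poly (map_poly of_rat (\<Sum>x\<in>I. smult (c x) (Wq x))) \<theta> = 0" unfolding ev_sum by simp
    have "degree (\<Sum>x\<in>I. smult (c x) (Wq x)) \<le> n - 1"
      by (rule degree_sum_le[OF finI], insert degWq, auto intro: le_trans[OF degree_smult_le])
    hence "degree (\<Sum>x\<in>I. smult (c x) (Wq x)) < degree f" using n0 n_def by simp
    from small_root_zero[OF irrQ root this z] indepQ
    show "\<forall>x\<in>I. c x = 0" by blast
  qed
  have part2: "\<forall>z\<in>zloc_adj p \<theta>. \<exists>c. (\<forall>x\<in>I. c x \<in> zloc p) \<and> z = (\<Sum>x\<in>I. of_rat (c x) * \<alpha> x)"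
  proof
    fix z assume "z \<in> zloc_adj p \<theta>"
    then obtain q where zq: "z = poly (map_poly of_rat q) \<theta>" and q: "\<forall>i. coeff q i \<in> zloc p"
      unfolding zloc_adj_def by auto
    obtain d Z where d: "d \<noteq> 0" "\<not> p dvd d" and Z: "of_int_poly Z = smult (of_int d) q"
      using zloc_poly_denom[OF p_prime q] by blast
    obtain s r where sr: "pdivmod_monic Z f = (s, r)" by force
    from pdivmod_monic[OF f_monic sr] have Zsr: "Z = f * s + r" and r: "r = 0 \<or> degree r < degree f" by auto
    have degR: "degree (of_int_poly r :: rat poly) < n" using r n0 n_def by auto
    obtain c0 where c0: "of_int_poly r = (\<Sum>x\<in>I. smult (c0 x) (Wq x))"
      using rat_span[OF finI cardI degWq indepQ degR] by blast
    obtain e a where e: "e > 0" and a: "\<forall>x\<in>I. c0 x = of_int (a x) / of_int e"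
      using common_denom[OF finI] by blast
    have "of_int_poly (smult e r) = (of_int_poly (\<Sum>x\<in>I. smult (a x) (W x)) :: rat poly)"
      unfolding of_int_hom.map_poly_hom_smult c0 of_int_poly_hom.hom_sum smult_sum2 Wq_def
      by (intro sum.cong refl, insert a e, auto simp: smult_smult)
    hence "smult e r = (\<Sum>x\<in>I. smult (a x) (W x))" by simp
    from reduce_p[OF p_prime P4' e this] obtain e' b where eb: "e' > 0" "\<not> p dvd e'"
      "smult e' r = (\<Sum>x\<in>I. smult (b x) (W x))" by blast
    define c where "c x = (of_int (b x) / of_int (e' * d) :: rat)" for x
    show "\<exists>c. (\<forall>x\<in>I. c x \<in> zloc p) \<and> z = (\<Sum>x\<in>I. of_rat (c x) * \<alpha> x)"
    proof (intro exI[of _ c] conjI ballI)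
      fix x
      show "c x \<in> zloc p" unfolding zloc_def c_def
        using eb d p_prime by (intro CollectI exI[of _ "b x"] exI[of _ "e' * d"], auto simp: prime_dvd_mult_iff)
    next
      have "of_int d * z = poly (map_poly of_rat (smult (of_int d) q)) \<theta>"
        unfolding zq of_rat_hom.map_poly_hom_smult by simp
      also have "\<dots> = poly (of_int_poly Z) \<theta>" unfolding Z[symmetric] ofrat_int ..
      also have "\<dots> = poly (of_int_poly r) \<theta>"
        unfolding Zsr of_int_poly_hom.hom_add of_int_poly_hom.hom_mult using root by simp
      finally have dz: "of_int d * z = poly (of_int_poly r) \<theta>" .
      have "of_int e' * (of_int d * z) = poly (of_int_poly (smult e' r)) \<theta>"
        unfolding dz of_int_hom.map_poly_hom_smult by simp
      also have "\<dots> = (\<Sum>x\<in>I. of_int (b x) * \<alpha> x)" unfolding eb(3) ev_int ..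
      finally have eq: "of_int (e' * d) * z = (\<Sum>x\<in>I. of_int (b x) * \<alpha> x)" by (simp add: ac_simps)
      have ne: "(of_int (e' * d) :: complex) \<noteq> 0" using eb d by simp
      have "z = (\<Sum>x\<in>I. of_int (b x) * \<alpha> x) / of_int (e' * d)" using eq ne by (simp add: field_simps)
      also have "\<dots> = (\<Sum>x\<in>I. of_rat (c x) * \<alpha> x)"
        unfolding c_def sum_divide_distrib by (intro sum.cong refl, simp add: of_rat_divide of_rat_mult)
      finally show "z = (\<Sum>x\<in>I. of_rat (c x) * \<alpha> x)" .
    qed
  qed
  have part4': "\<forall>c :: nat \<times> nat \<times> nat \<Rightarrow> int.
         poly_mod.Mp p (\<Sum>x\<in>I. case x of (i, j, k) \<Rightarrow>
            smult (c x) (int_quot f (g i ^ j) * monom 1 k)) = 0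
         \<longrightarrow> (\<forall>x\<in>I. p dvd c x)" using P4 by blast
  show ?thesis using part1 part2 part3 part4' by blast
qed

end
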